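(* Under the setting, assumptions (A1)–(A2) and the algorithm PDAc-L described in the context, fix any $(x^\star,y^\star)\in\Omega$ and let $J(x,y)=\mathcal L(x,y^\star)-\mathcal L(x^\star,y)$. Then for every $n\ge1$, $$\tau_nJ(x_n,y_n)\le\langle x_{n+1}-z_{n+1},x^\star-x_{n+1}\rangle+\frac1\beta\langle y_n-y_{n-1},y^\star-y_n\rangle+\psi\delta_n\langle x_n-z_{n+1},x_{n+1}-x_n\rangle+\tau_n\langle\theta_n,x_n-x_{n+1}\rangle+\tau_n\Phi_n^y.$$
   Context: Let $f:\mathbb{R}^p\to(-\infty,+\infty]$ and $g:\mathbb{R}^q\to(-\infty,+\infty]$ be proper closed convex functions; $f^*(y)=\sup_u\{\langle y,u\rangle-f(u)\}$ is the Fenchel conjugate, $\mathrm{dom}(h)=\{x:h(x)<+\infty\}$, and for $\lambda>0$, $\mathrm{Prox}_{\lambda h}(x)=\arg\min_u\{h(u)+\frac{1}{2\lambda}\|u-x\|^2\}$. Let $\Phi:\mathrm{dom}(g)\times\mathrm{dom}(f^* )\to\mathbb{R}$ be continuous and $\mathcal L(x,y)=g(x)+\Phi(x,y)-f^*(y)$. Let $\Omega$ be the set of $(x^\star,y^\star)\in\mathrm{dom}(g)\times\mathrm{dom}(f^* )$ with $-\nabla_x\Phi(x^\star,y^\star)\in\partial g(x^\star)$ and $\nabla_y\Phi(x^\star,y^\star)\in\partial f^*(y^\star)$. Assume: (A1) $\Omega\neq\emptyset$, $\mathrm{dom}(g)\times\mathrm{dom}(f^* )\subseteq\mathrm{dom}(\Phi)$,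 and $\mathcal L(x^\star,y^\star)$ is finite; (A2) for each $y\in\mathrm{dom}(f^* )$, $\Phi(\cdot,y)$ is convex and differentiable, for each $x\in\mathrm{dom}(g)$, $\Phi(x,\cdot)$ is concave and differentiable, and for all bounded $\mathcal X\subset\mathbb R^q$, $\mathcal Y\subset\mathbb R^p$ there exist $L_{yy},L_{xx}\ge 0$, $L_{xy}>0$ with $\|\nabla_y\Phi(x,y)-\nabla_y\Phi(x,\tilde y)\|\le L_{yy}\|y-\tilde y\|$ and $\|\nabla_x\Phi(x,y)-\nabla_x\Phi(\tilde x,\tilde y)\|\le L_{xx}\|x-\tilde x\|+L_{xy}\|y-\tilde y\|$ for all $x,\tilde x\in\mathcal X\cap\mathrm{dom}(g)$, $y,\tilde y\in\mathcal Y\cap\mathrm{dom}(f^* )$. Algorithm PDAc-L: choose $\psi\in(1,1+\sqrt3)$, $\xi>0$, $\varphi>1$ with $\omega:=2\psi-\xi-\frac{\psi^3\varphi}{1+\psi}>0$, $\tau_{\max}>0$, $\nu\in(0,1)$, $\mu\in(0,1)$, $\eta\in[0,1)$, an integer $M\ge1$, $\beta>0$, $x_0\in\mathrm{dom}(g)$, $y_0\in\mathrm{dom}(f^* )$, $\tau_0\in(0,\tau_{\max}]$; set $z_0=x_0$, $\delta_0=1$. For $n=1,2,\dots$: (1) $z_n=\frac{\psi-1}{\psi}x_{n-1}+\frac1\psi z_{n-1}$ and $x_n=\mathrm{Prox}_{\tau_{n-1}g}(z_n-\tau_{n-1}\nabla_x\Phi(x_{n-1},y_{n-1}))$. (2)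 Let $\tau=\min\{\varphi\tau_{n-1},\tau_{\max}\}$; set $\tau_n=\tau\mu^i$ and $y_n=\mathrm{Prox}_{\beta\tau_n f^*}(y_{n-1}+\beta\tau_n\nabla_y\Phi(x_n,y_{n-1}))$, where $i$ is the smallest nonnegative integer such that $\frac{\tau_n\tau_{n-1}}{\xi}\|\theta_n\|^2+2\tau_n\Phi_n^y\le\nu r_n+(1-\nu)c_n$, with $\theta_n=\nabla_x\Phi(x_n,y_n)-\nabla_x\Phi(x_{n-1},y_{n-1})$, $\Phi_n^y=\Phi(x_n,y_{n-1})+\langle\nabla_y\Phi(x_n,y_{n-1}),y_n-y_{n-1}\rangle-\Phi(x_n,y_n)$, $r_n=\omega\delta_{n-1}\|x_n-x_{n-1}\|^2+\frac1\beta\|y_n-y_{n-1}\|^2$, $c_n=\frac{\eta}{|\mathcal I_n|}\sum_{i\in\mathcal I_n}r_i$, $\mathcal I_n=\{n-1,n-2,\dots,\max\{n-M,1\}\}$ (the $r_i$ for $i<n$ being the values from earlier iterations; for $n=1$, $\mathcal I_1=\emptyset$ and $c_1:=0$). (3) $\delta_n=\tau_n/\tau_{n-1}$. *)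

theory Defs
  imports "HOL-Analysis.Analysis"
begin

definition edom :: "('a \<Rightarrow> ereal) \<Rightarrow> 'a set" where
  "edom h = {x. h x < \<infinity>}"

definition proper_fun :: "('a \<Rightarrow> ereal) \<Rightarrow> bool" where
  "proper_fun h \<longleftrightarrow> (\<forall>x. h x \<noteq> -\<infinity>) \<and> (\<exists>x. h x < \<infinity>)"

definition convex_fun :: "('a::real_vector \<Rightarrow> ereal) \<Rightarrow> bool" where
  "convex_fun h \<longleftrightarrow> convex {(x, t::real). h x \<le> ereal t}"

definition closed_fun :: "('a::topological_space \<Rightarrow> ereal) \<Rightarrow> bool" where
  "closed_fun h \<longleftrightarrow> closed {(x, t::real). h x \<le> ereal t}"

definition fconj :: "('a::real_inner \<Rightarrow> ereal) \<Rightarrow> 'a \<Rightarrow> ereal" where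
  "fconj f y = (SUP u. ereal (y \<bullet> u) - f u)"

definition subdiff :: "('a::real_inner \<Rightarrow> ereal) \<Rightarrow> 'a \<Rightarrow> 'a set" where
  "subdiff h x = {v. h x < \<infinity> \<and> (\<forall>u. h x + ereal (v \<bullet> (u - x)) \<le> h u)}"

definition Prox :: "real \<Rightarrow> ('a::real_normed_vector \<Rightarrow> ereal) \<Rightarrow> 'a \<Rightarrow> 'a set" where
  "Prox lam h x = {u. \<forall>v. h u + ereal (norm (u - x)^2 / (2 * lam))
                         \<le> h v + ereal (norm (v - x)^2 / (2 * lam))}"

definition Lag :: "('a \<Rightarrow> ereal) \<Rightarrow> ('a \<Rightarrow> 'b \<Rightarrow> real) \<Rightarrow> ('b \<Rightarrow> ereal) \<Rightarrow> 'a \<Rightarrow> 'b \<Rightarrow> ereal" where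
  "Lag g Phi fs x y = g x + ereal (Phi x y) - fs y"

definition rval :: "real \<Rightarrow> real \<Rightarrow> real \<Rightarrow> 'a::real_normed_vector \<Rightarrow> 'a \<Rightarrow> 'b::real_normed_vector \<Rightarrow> 'b \<Rightarrow> real" where
  "rval \<omega> \<beta> d xn xp yn yp = \<omega> * d * norm (xn - xp)^2 + 1 / \<beta> * norm (yn - yp)^2"

text \<open>I_n = {max(n-M,1), ..., n-1}; for n = 1 this is empty and c_1 = 0.\<close>
definition ls_ok :: "('a::real_inner \<Rightarrow> 'b::real_inner \<Rightarrow> real) \<Rightarrow> ('a \<Rightarrow> 'b \<Rightarrow> 'a) \<Rightarrow> ('a \<Rightarrow> 'b \<Rightarrow> 'b)
   \<Rightarrow> real \<Rightarrow> real \<Rightarrow> real \<Rightarrow> real \<Rightarrow> real \<Rightarrow> nat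
   \<Rightarrow> (nat \<Rightarrow> 'a) \<Rightarrow> (nat \<Rightarrow> 'b) \<Rightarrow> (nat \<Rightarrow> real) \<Rightarrow> (nat \<Rightarrow> real) \<Rightarrow> nat \<Rightarrow> real \<Rightarrow> 'b \<Rightarrow> bool" where
  "ls_ok Phi Gx Gy \<xi> \<omega> \<beta> \<nu> \<eta> M x y \<tau> \<delta> n t y' \<longleftrightarrow>
     (let \<theta> = Gx (x n) y' - Gx (x (n - 1)) (y (n - 1));
          Py = Phi (x n) (y (n - 1)) + Gy (x n) (y (n - 1)) \<bullet> (y' - y (n - 1)) - Phi (x n) y';
          r = rval \<omega> \<beta> (\<delta> (n - 1)) (x n) (x (n - 1)) y' (y (n - 1));
          I = {max (n - M) 1 ..< n};
          c = \<eta> / real (card I) *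
              (\<Sum>i\<in>I. rval \<omega> \<beta> (\<delta> (i - 1)) (x i) (x (i - 1)) (y i) (y (i - 1)))
      in t * \<tau> (n - 1) / \<xi> * norm \<theta>^2 + 2 * t * Py \<le> \<nu> * r + (1 - \<nu>) * c)"

end

theory Submission
  imports Defs
begin

definition cvx_e :: "('a::real_vector \<Rightarrow> ereal) \<Rightarrow> bool" where
  "cvx_e h \<longleftrightarrow> (\<forall>u v a b t. h u = ereal a \<longrightarrow> h v = ereal b \<longrightarrow> 0 \<le> t \<longrightarrow> t \<le> 1 \<longrightarrow>
      h ((1 - t) *\<^sub>R u + t *\<^sub>R v) \<le> ereal ((1 - t) * a + t * b))"

lemma cvx_e_g:
  assumes "convex_fun g" shows "cvx_e g"
  unfolding cvx_e_def
proof (intro allI impI)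
  fix u v a b and t :: real
  assume ua: "g u = ereal a" and vb: "g v = ereal b" and t: "0 \<le> t" "t \<le> 1"
  have c: "convex {(x, t::real). g x \<le> ereal t}" using assms unfolding convex_fun_def .
  have "(1 - t) *\<^sub>R (u, a) + t *\<^sub>R (v, b) \<in> {(x, t::real). g x \<le> ereal t}"
    by (rule convexD[OF c]) (use ua vb t in auto)
  then show "g ((1 - t) *\<^sub>R u + t *\<^sub>R v) \<le> ereal ((1 - t) * a + t * b)"
    by simp
qed

lemma fconj_not_minf:
  assumes "proper_fun f" shows "fconj f y \<noteq> -\<infinity>"
proof -
  obtain w where w: "f w < \<infinity>" using assms unfolding proper_fun_def by blast
  have "f w \<noteq> -\<infinity>" using assms unfolding proper_fun_def by blast
  then obtain r where r: "f w = ereal r" using w by (cases "f w") auto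
  have "ereal (y \<bullet> w) - f w \<le> fconj f y" unfolding fconj_def by (rule SUP_upper) auto
  then show ?thesis using r by auto
qed

lemma cvx_e_fconj:
  assumes "proper_fun f" shows "cvx_e (fconj f)"
  unfolding cvx_e_def
proof (intro allI impI)
  fix u v a b and t :: real
  assume ua: "fconj f u = ereal a" and vb: "fconj f v = ereal b" and t: "0 \<le> t" "t \<le> 1"
  show "fconj f ((1 - t) *\<^sub>R u + t *\<^sub>R v) \<le> ereal ((1 - t) * a + t * b)"
    unfolding fconj_def
  proof (rule SUP_least)
    fix w assume "w \<in> (UNIV :: 'a set)"
    show "ereal (((1 - t) *\<^sub>R u + t *\<^sub>R v) \<bullet> w) - f w \<le> ereal ((1 - t) * a + t * b)"
    proof (cases "f w")
      case (real r)
      have "ereal (u \<bullet> w) - f w \<le> fconj f u" unfolding fconj_def by (rule SUP_upper) auto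
      then have 1: "u \<bullet> w - r \<le> a" using real ua by simp
      have "ereal (v \<bullet> w) - f w \<le> fconj f v" unfolding fconj_def by (rule SUP_upper) auto
      then have 2: "v \<bullet> w - r \<le> b" using real vb by simp
      have "((1 - t) *\<^sub>R u + t *\<^sub>R v) \<bullet> w - r = (1 - t) * (u \<bullet> w - r) + t * (v \<bullet> w - r)"
        by (simp add: inner_add_left algebra_simps)
      also have "\<dots> \<le> (1 - t) * a + t * b"
        using 1 2 t by (intro add_mono mult_left_mono) auto
      finally show ?thesis using real by simp
    next
      case PInf then show ?thesis by simp
    next
      case MInf then show ?thesis using assms unfolding proper_fun_def by blast
    qed
  qed
qed

lemma small_param:
  fixes X Y C :: real
  assumes "\<And>t. 0 < t \<Longrightarrow> t \<le> 1 \<Longrightarrow> X \<le> Y + t * C" and "C \<ge> 0"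
  shows "X \<le> Y"
proof (rule ccontr)
  assume "\<not> X \<le> Y"
  then have d: "X - Y > 0" by simp
  define t where "t = min 1 ((X - Y) / (C + 1))"
  have t0: "0 < t" "t \<le> 1" using d assms(2) by (auto simp: t_def)
  have "t * C \<le> ((X - Y) / (C + 1)) * C"
    using assms(2) by (intro mult_right_mono) (auto simp: t_def)
  also have "\<dots> < X - Y" using d assms(2) by (simp add: field_simps)
  finally show False using assms(1)[OF t0] by simp
qed

lemma prox_dom:
  assumes "u \<in> Prox lam h w" "h v < \<infinity>" "\<And>x. h x \<noteq> -\<infinity>"
  shows "h u < \<infinity>"
proof -
  have "h u + ereal (norm (u - w)^2 / (2 * lam)) \<le> h v + ereal (norm (v - w)^2 / (2 * lam))"
    using assms(1) unfolding Prox_def by blast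
  also have "\<dots> < \<infinity>" using assms(2) by simp
  finally show ?thesis by auto
qed

lemma prox_ineq:
  fixes h :: "'a::real_inner \<Rightarrow> ereal"
  assumes P: "u \<in> Prox lam h w" and lam: "lam > 0" and cv: "cvx_e h"
    and ua: "h u = ereal a" and vb: "h v = ereal b"
  shows "(w - u) \<bullet> (v - u) \<le> lam * (b - a)"
proof (rule small_param[where C = "norm (v - u)^2 / 2"])
  fix t :: real assume t: "0 < t" "t \<le> 1"
  define vt where "vt = (1 - t) *\<^sub>R u + t *\<^sub>R v"
  have "h u + ereal (norm (u - w)^2 / (2 * lam)) \<le> h vt + ereal (norm (vt - w)^2 / (2 * lam))"
    using P unfolding Prox_def by blast
  also have "\<dots> \<le> ereal ((1 - t) * a + t * b) + ereal (norm (vt - w)^2 / (2 * lam))"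
    using cv ua vb t unfolding cvx_e_def vt_def by (intro add_right_mono) auto
  finally have 1: "a + norm (u - w)^2 / (2 * lam) \<le> (1 - t) * a + t * b + norm (vt - w)^2 / (2 * lam)"
    using ua by simp
  have vt: "vt - w = (u - w) + t *\<^sub>R (v - u)" by (simp add: vt_def algebra_simps)
  have n: "norm (vt - w)^2 = norm (u - w)^2 + 2 * t * ((u - w) \<bullet> (v - u)) + t^2 * norm (v - u)^2"
    unfolding vt power2_norm_eq_inner
    by (simp add: inner_add_left inner_add_right inner_commute algebra_simps power2_eq_square)
  have "t * a * (2 * lam) \<le> (t * b) * (2 * lam) + 2 * t * ((u - w) \<bullet> (v - u)) + t^2 * norm (v - u)^2"
  proof -
    have 2: "(a + norm (u - w)^2 / (2 * lam)) * (2 * lam) \<le> ((1 - t) * a + t * b + norm (vt - w)^2 / (2 * lam)) * (2 * lam)"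
      by (rule mult_right_mono[OF 1]) (use lam in simp)
    have "a * (2 * lam) + norm (u - w)^2 \<le> ((1 - t) * a + t * b) * (2 * lam) + norm (vt - w)^2"
      using 2 lam by (simp add: distrib_right)
    then show ?thesis unfolding n by (simp add: algebra_simps)
  qed
  then have "t * (2 * lam * a) \<le> t * (2 * lam * b + 2 * ((u - w) \<bullet> (v - u)) + t * norm (v - u)^2)"
    by (simp add: algebra_simps power2_eq_square)
  then have "2 * lam * a \<le> 2 * lam * b + 2 * ((u - w) \<bullet> (v - u)) + t * norm (v - u)^2"
    using t by simp
  moreover have "(w - u) \<bullet> (v - u) = - ((u - w) \<bullet> (v - u))" by (simp add: inner_diff_left)
  ultimately show "(w - u) \<bullet> (v - u) \<le> lam * (b - a) + t * (norm (v - u)^2 / 2)"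
    by (simp add: algebra_simps)
qed simp

lemma tangent_ineq:
  fixes F :: "'a::real_inner \<Rightarrow> real"
  assumes cv: "convex_on S F" and a: "a \<in> S" and b: "b \<in> S"
    and d: "(F has_derivative (\<lambda>h. G \<bullet> h)) (at a within S)"
  shows "F a + G \<bullet> (b - a) \<le> F b"
proof -
  define p where "p = (\<lambda>t::real. a + t *\<^sub>R (b - a))"
  have cS: "convex S" using cv unfolding convex_on_def by blast
  have pS: "p ` {0..1} \<subseteq> S"
  proof
    fix q assume "q \<in> p ` {0..1}"
    then obtain t where t: "t \<in> {0..1}" "q = p t" by blast
    have "(1 - t) *\<^sub>R a + t *\<^sub>R b \<in> S" using convexD[OF cS a b, of "1 - t" t] t by auto
    moreover have "p t = (1 - t) *\<^sub>R a + t *\<^sub>R b" by (simp add: p_def algebra_simps)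
    ultimately show "q \<in> S" using t by simp
  qed
  have dp: "(p has_derivative (\<lambda>t. t *\<^sub>R (b - a))) (at 0 within {0..1})"
    unfolding p_def by (auto intro!: derivative_eq_intros)
  have "p 0 = a" by (simp add: p_def)
  then have dF: "(F has_derivative (\<lambda>h. G \<bullet> h)) (at (p 0) within p ` {0..1})"
    using has_derivative_subset[OF d pS] by simp
  have "((F \<circ> p) has_derivative ((\<lambda>h. G \<bullet> h) \<circ> (\<lambda>t. t *\<^sub>R (b - a)))) (at 0 within {0..1})"
    by (rule diff_chain_within[OF dp dF])
  moreover have "((\<lambda>h. G \<bullet> h) \<circ> (\<lambda>t. t *\<^sub>R (b - a))) = (*) (G \<bullet> (b - a))"
    by (auto simp: fun_eq_iff)
  ultimately have "((F \<circ> p) has_field_derivative (G \<bullet> (b - a))) (at 0 within {0..1})"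
    unfolding has_field_derivative_def by simp
  then have lim: "((\<lambda>y. ((F \<circ> p) y - (F \<circ> p) 0) / (y - 0)) \<longlongrightarrow> G \<bullet> (b - a)) (at 0 within {0..1})"
    unfolding has_field_derivative_iff .
  have ev: "eventually (\<lambda>y. ((F \<circ> p) y - (F \<circ> p) 0) / (y - 0) \<le> F b - F a) (at 0 within {0..1::real})"
    unfolding eventually_at_filter
  proof (intro always_eventually allI impI)
    fix y :: real assume y: "y \<noteq> 0" "y \<in> {0..1}"
    have "p y = (1 - y) *\<^sub>R a + y *\<^sub>R b" by (simp add: p_def algebra_simps)
    then have "F (p y) \<le> (1 - y) * F a + y * F b"
      using convex_onD[OF cv, of y a b] y a b by auto
    then have "F (p y) - F a \<le> y * (F b - F a)" by (simp add: algebra_simps)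
    then show "((F \<circ> p) y - (F \<circ> p) 0) / (y - 0) \<le> F b - F a"
      using y \<open>p 0 = a\<close> by (simp add: divide_le_eq mult.commute)
  qed
  have nt: "\<not> trivial_limit (at (0::real) within {0..1})"
    by (simp add: trivial_limit_within islimpt_Icc) 
  have "G \<bullet> (b - a) \<le> F b - F a" by (rule tendsto_upperbound[OF lim ev nt])
  then show ?thesis by simp
qed

theorem lemma3p1:
  fixes g :: "'a::euclidean_space \<Rightarrow> ereal"
    and f :: "'b::euclidean_space \<Rightarrow> ereal"
    and Phi :: "'a \<Rightarrow> 'b \<Rightarrow> real"
    and Gx :: "'a \<Rightarrow> 'b \<Rightarrow> 'a"
    and Gy :: "'a \<Rightarrow> 'b \<Rightarrow> 'b"
    and \<psi> \<xi> \<phi> \<omega> \<tau>max \<nu> \<mu> \<eta> \<beta> :: real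
    and M :: nat
    and x z :: "nat \<Rightarrow> 'a" and y :: "nat \<Rightarrow> 'b"
    and \<tau> \<delta> :: "nat \<Rightarrow> real"
    and xs :: 'a and ys :: 'b
    and n :: nat
  assumes f_pcc: "proper_fun f" "convex_fun f" "closed_fun f"
    and g_pcc: "proper_fun g" "convex_fun g" "closed_fun g"
    and Phi_cont: "continuous_on (edom g \<times> edom (fconj f)) (\<lambda>(u, v). Phi u v)"
    (* (A2) *)
    and Phi_convex: "\<And>v. v \<in> edom (fconj f) \<Longrightarrow> convex_on (edom g) (\<lambda>u. Phi u v)"
    and Phi_dx: "\<And>u v. u \<in> edom g \<Longrightarrow> v \<in> edom (fconj f) \<Longrightarrow>
                   ((\<lambda>u'. Phi u' v) has_derivative (\<lambda>h. Gx u v \<bullet> h)) (at u within edom g)"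
    and Phi_concave: "\<And>u. u \<in> edom g \<Longrightarrow> concave_on (edom (fconj f)) (\<lambda>v. Phi u v)"
    and Phi_dy: "\<And>u v. u \<in> edom g \<Longrightarrow> v \<in> edom (fconj f) \<Longrightarrow>
                   ((\<lambda>v'. Phi u v') has_derivative (\<lambda>h. Gy u v \<bullet> h)) (at v within edom (fconj f))"
    and Phi_lip: "\<And>X Y. bounded X \<Longrightarrow> bounded Y \<Longrightarrow>
         \<exists>Lyy Lxx Lxy. Lyy \<ge> 0 \<and> Lxx \<ge> 0 \<and> Lxy > 0 \<and>
           (\<forall>u\<in>X \<inter> edom g. \<forall>u'\<in>X \<inter> edom g. \<forall>v\<in>Y \<inter> edom (fconj f). \<forall>v'\<in>Y \<inter> edom (fconj f).
              norm (Gy u v - Gy u v') \<le> Lyy * norm (v - v') \<and>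
              norm (Gx u v - Gx u' v') \<le> Lxx * norm (u - u') + Lxy * norm (v - v'))"
    (* (A1) and the fixed saddle point (xs, ys) \<in> Omega *)
    and xs_dom: "xs \<in> edom g" and ys_dom: "ys \<in> edom (fconj f)"
    and xs_opt: "- Gx xs ys \<in> subdiff g xs"
    and ys_opt: "Gy xs ys \<in> subdiff (fconj f) ys"
    and L_fin: "\<bar>Lag g Phi (fconj f) xs ys\<bar> \<noteq> \<infinity>"
    (* parameters of PDAc-L *)
    and psi: "1 < \<psi>" "\<psi> < 1 + sqrt 3"
    and xi: "\<xi> > 0" and phi: "\<phi> > 1"
    and omega: "\<omega> = 2 * \<psi> - \<xi> - \<psi>^3 * \<phi> / (1 + \<psi>)" "\<omega> > 0"
    and taumax: "\<tau>max > 0"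
    and nu: "0 < \<nu>" "\<nu> < 1" and mu: "0 < \<mu>" "\<mu> < 1"
    and eta: "0 \<le> \<eta>" "\<eta> < 1"
    and M: "M \<ge> 1" and beta: "\<beta> > 0"
    (* initialisation *)
    and x0: "x 0 \<in> edom g" and y0: "y 0 \<in> edom (fconj f)"
    and tau0: "0 < \<tau> 0" "\<tau> 0 \<le> \<tau>max"
    and z0: "z 0 = x 0" and delta0: "\<delta> 0 = 1"
    (* iteration k \<ge> 1 *)
    and step_z: "\<And>k. k \<ge> 1 \<Longrightarrow> z k = ((\<psi> - 1) / \<psi>) *\<^sub>R x (k - 1) + (1 / \<psi>) *\<^sub>R z (k - 1)"
    and step_x: "\<And>k. k \<ge> 1 \<Longrightarrow>
        x k \<in> Prox (\<tau> (k - 1)) g (z k - \<tau> (k - 1) *\<^sub>R Gx (x (k - 1)) (y (k - 1)))"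
    and step_y: "\<And>k. k \<ge> 1 \<Longrightarrow> \<exists>i::nat.
        \<tau> k = min (\<phi> * \<tau> (k - 1)) \<tau>max * \<mu> ^ i \<and>
        y k \<in> Prox (\<beta> * \<tau> k) (fconj f) (y (k - 1) + (\<beta> * \<tau> k) *\<^sub>R Gy (x k) (y (k - 1))) \<and>
        ls_ok Phi Gx Gy \<xi> \<omega> \<beta> \<nu> \<eta> M x y \<tau> \<delta> k (\<tau> k) (y k) \<and>
        (\<forall>j<i. \<forall>y'. y' \<in> Prox (\<beta> * (min (\<phi> * \<tau> (k - 1)) \<tau>max * \<mu> ^ j)) (fconj f)
                         (y (k - 1) + (\<beta> * (min (\<phi> * \<tau> (k - 1)) \<tau>max * \<mu> ^ j)) *\<^sub>R Gy (x k) (y (k - 1)))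
              \<longrightarrow> \<not> ls_ok Phi Gx Gy \<xi> \<omega> \<beta> \<nu> \<eta> M x y \<tau> \<delta> k
                       (min (\<phi> * \<tau> (k - 1)) \<tau>max * \<mu> ^ j) y')"
    and step_delta: "\<And>k. k \<ge> 1 \<Longrightarrow> \<delta> k = \<tau> k / \<tau> (k - 1)"
    and n: "n \<ge> 1"
  shows "ereal (\<tau> n) * (Lag g Phi (fconj f) (x n) ys - Lag g Phi (fconj f) xs (y n))
         \<le> ereal ((x (n + 1) - z (n + 1)) \<bullet> (xs - x (n + 1))
              + 1 / \<beta> * ((y n - y (n - 1)) \<bullet> (ys - y n))
              + \<psi> * \<delta> n * ((x n - z (n + 1)) \<bullet> (x (n + 1) - x n))
              + \<tau> n * ((Gx (x n) (y n) - Gx (x (n - 1)) (y (n - 1))) \<bullet> (x n - x (n + 1)))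
              + \<tau> n * (Phi (x n) (y (n - 1)) + Gy (x n) (y (n - 1)) \<bullet> (y n - y (n - 1)) - Phi (x n) (y n)))"
proof -
  have gnm: "\<And>u. g u \<noteq> -\<infinity>" using g_pcc(1) unfolding proper_fun_def by blast
  have fnm: "\<And>u. fconj f u \<noteq> -\<infinity>" using fconj_not_minf[OF f_pcc(1)] by blast
  have cg: "cvx_e g" by (rule cvx_e_g[OF g_pcc(2)])
  have cf: "cvx_e (fconj f)" by (rule cvx_e_fconj[OF f_pcc(1)])
  obtain x1 where x1: "g x1 < \<infinity>" using g_pcc(1) unfolding proper_fun_def by blast
  have ys_lt: "fconj f ys < \<infinity>" using ys_dom unfolding edom_def by simp
  have taupos: "\<tau> k > 0" for k
  proof (induction k)
    case 0 then show ?case using tau0 by simp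
  next
    case (Suc k)
    obtain i where "\<tau> (Suc k) = min (\<phi> * \<tau> k) \<tau>max * \<mu> ^ i" using step_y[of "Suc k"] by auto
    then show ?case using Suc phi taumax mu by simp
  qed
  have xdom: "g (x k) < \<infinity>" for k
  proof (cases k)
    case 0 then show ?thesis using x0 unfolding edom_def by simp
  next
    case (Suc m)
    then show ?thesis using prox_dom[OF step_x[of k] x1 gnm] by simp
  qed
  have ydom: "fconj f (y k) < \<infinity>" for k
  proof (cases k)
    case 0 then show ?thesis using y0 unfolding edom_def by simp
  next
    case (Suc m)
    then obtain i where "y k \<in> Prox (\<beta> * \<tau> k) (fconj f) (y (k - 1) + (\<beta> * \<tau> k) *\<^sub>R Gy (x k) (y (k - 1)))"
      using step_y[of k] by auto
    then show ?thesis using prox_dom[of "y k" _ "fconj f" _ ys] ys_lt fnm by blast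
  qed
  have xe: "x k \<in> edom g" for k using xdom[of k] unfolding edom_def by simp
  have ye: "y k \<in> edom (fconj f)" for k using ydom[of k] unfolding edom_def by simp
  have fin: "\<exists>r. h u = ereal r" if "h u < \<infinity>" "h u \<noteq> -\<infinity>" for h :: "'c \<Rightarrow> ereal" and u
    using that by (cases "h u") auto
  obtain Gs where Gs: "g xs = ereal Gs" using fin[of g xs] xs_dom gnm unfolding edom_def by auto
  obtain Gn where Gn: "g (x n) = ereal Gn" using fin[of g "x n"] xdom gnm by auto
  obtain Gn1 where Gn1: "g (x (n + 1)) = ereal Gn1" using fin[of g "x (n + 1)"] xdom gnm by auto
  obtain Fs where Fs: "fconj f ys = ereal Fs" using fin[of "fconj f" ys] ys_lt fnm by auto
  obtain Fn where Fn: "fconj f (y n) = ereal Fn" using fin[of "fconj f" "y n"] ydom fnm by auto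
  define A where "A = x (n + 1)"
  define Gxn where "Gxn = Gx (x n) (y n)"
  define Gxp where "Gxp = Gx (x (n - 1)) (y (n - 1))"
  define Gy' where "Gy' = Gy (x n) (y (n - 1))"
  define tn where "tn = \<tau> n"
  define tp where "tp = \<tau> (n - 1)"
  have tn: "tn > 0" and tp: "tp > 0" using taupos by (auto simp: tn_def tp_def)
  have dn: "\<delta> n * tp = tn" using step_delta[OF n] tp by (simp add: tn_def tp_def)
  have dn0: "\<delta> n \<ge> 0" using step_delta[OF n] taupos[of n] taupos[of "n - 1"] by simp
  have P1raw: "((z (n + 1) - tn *\<^sub>R Gxn) - A) \<bullet> (xs - A) \<le> tn * (Gs - Gn1)"
    using prox_ineq[OF step_x[of "n + 1"] _ cg Gn1 Gs] tn
    by (simp add: A_def Gxn_def tn_def)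
  have P1id: "((z (n + 1) - tn *\<^sub>R Gxn) - A) \<bullet> (xs - A) = - ((A - z (n + 1)) \<bullet> (xs - A)) - tn * (Gxn \<bullet> (xs - A))"
    by (simp add: inner_diff_left algebra_simps)
  have P2raw: "((z n - tp *\<^sub>R Gxp) - x n) \<bullet> (A - x n) \<le> tp * (Gn1 - Gn)"
    using prox_ineq[OF step_x[OF n] _ cg Gn Gn1] tp
    by (simp add: A_def Gxp_def tp_def)
  have zrel: "z n - x n = \<psi> *\<^sub>R (z (n + 1) - x n)"
  proof -
    have "z (n + 1) = ((\<psi> - 1) / \<psi>) *\<^sub>R x n + (1 / \<psi>) *\<^sub>R z n" using step_z[of "n + 1"] by simp
    then have "\<psi> *\<^sub>R z (n + 1) = (\<psi> - 1) *\<^sub>R x n + z n" using psi by (simp add: scaleR_add_right)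
    then show ?thesis by (simp add: scaleR_diff_right scaleR_diff_left)
  qed
  have P2id: "((z n - tp *\<^sub>R Gxp) - x n) \<bullet> (A - x n) = - (\<psi> * ((x n - z (n + 1)) \<bullet> (A - x n))) - tp * (Gxp \<bullet> (A - x n))"
  proof -
    have e1: "((z n - tp *\<^sub>R Gxp) - x n) = (z n - x n) - tp *\<^sub>R Gxp" by simp
    have e2: "(z n - x n) \<bullet> (A - x n) = \<psi> * ((z (n + 1) - x n) \<bullet> (A - x n))"
      by (simp only: zrel inner_scaleR_left)
    have e3: "(z (n + 1) - x n) \<bullet> (A - x n) = - ((x n - z (n + 1)) \<bullet> (A - x n))"
      by (simp add: inner_diff_left)
    show ?thesis unfolding e1 inner_diff_left[of "z n - x n"] e2 e3 by simp
  qed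
  have P2: "\<delta> n * (- (\<psi> * ((x n - z (n + 1)) \<bullet> (A - x n))) - tp * (Gxp \<bullet> (A - x n))) \<le> tn * (Gn1 - Gn)"
  proof -
    have "\<delta> n * (((z n - tp *\<^sub>R Gxp) - x n) \<bullet> (A - x n)) \<le> \<delta> n * (tp * (Gn1 - Gn))"
      using P2raw dn0 by (rule mult_left_mono)
    then show ?thesis unfolding P2id using dn by (simp add: mult.assoc[symmetric])
  qed
  have P2e: "\<delta> n * (- (\<psi> * ((x n - z (n + 1)) \<bullet> (A - x n))) - tp * (Gxp \<bullet> (A - x n)))
     = - (\<psi> * \<delta> n * ((x n - z (n + 1)) \<bullet> (A - x n))) - tn * (Gxp \<bullet> (A - x n))"
  proof -
    have k: "\<delta> n * (tp * (Gxp \<bullet> (A - x n))) = tn * (Gxp \<bullet> (A - x n))"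
      by (simp add: dn[symmetric] mult.assoc)
    have "\<delta> n * (- (\<psi> * ((x n - z (n + 1)) \<bullet> (A - x n))) - tp * (Gxp \<bullet> (A - x n)))
      = - (\<psi> * \<delta> n * ((x n - z (n + 1)) \<bullet> (A - x n))) - \<delta> n * (tp * (Gxp \<bullet> (A - x n)))"
      by (simp add: algebra_simps)
    then show ?thesis using k by linarith
  qed
  obtain i where yP: "y n \<in> Prox (\<beta> * \<tau> n) (fconj f) (y (n - 1) + (\<beta> * \<tau> n) *\<^sub>R Gy (x n) (y (n - 1)))"
    using step_y[OF n] by auto
  have P3raw: "((y (n - 1) + (\<beta> * tn) *\<^sub>R Gy') - y n) \<bullet> (ys - y n) \<le> (\<beta> * tn) * (Fs - Fn)"
    using prox_ineq[OF yP _ cf Fn Fs] tn beta by (simp add: Gy'_def tn_def)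
  have P3id: "((y (n - 1) + (\<beta> * tn) *\<^sub>R Gy') - y n) \<bullet> (ys - y n)
     = - ((y n - y (n - 1)) \<bullet> (ys - y n)) + \<beta> * (tn * (Gy' \<bullet> (ys - y n)))"
    by (simp add: inner_diff_left inner_add_left algebra_simps)
  have P3: "1 / \<beta> * (- ((y n - y (n - 1)) \<bullet> (ys - y n))) + tn * (Gy' \<bullet> (ys - y n)) \<le> tn * (Fs - Fn)"
  proof -
    have "- ((y n - y (n - 1)) \<bullet> (ys - y n)) + \<beta> * (tn * (Gy' \<bullet> (ys - y n))) \<le> \<beta> * (tn * (Fs - Fn))"
      using P3raw P3id by simp
    then have "(1 / \<beta>) * (- ((y n - y (n - 1)) \<bullet> (ys - y n)) + \<beta> * (tn * (Gy' \<bullet> (ys - y n)))) \<le> (1 / \<beta>) * (\<beta> * (tn * (Fs - Fn)))"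
      by (rule mult_left_mono) (use beta in simp)
    then show ?thesis using beta by (simp add: distrib_left diff_divide_distrib)
  qed
  have T1: "Phi (x n) (y n) + Gxn \<bullet> (xs - x n) \<le> Phi xs (y n)"
    unfolding Gxn_def
    by (rule tangent_ineq[OF Phi_convex[OF ye] xe xs_dom Phi_dx[OF xe ye]])
  have T2: "Phi (x n) ys \<le> Phi (x n) (y (n - 1)) + Gy' \<bullet> (ys - y (n - 1))"
  proof -
    have cv: "convex_on (edom (fconj f)) (\<lambda>v. - Phi (x n) v)"
      using Phi_concave[OF xe] unfolding concave_on_def .
    have d: "((\<lambda>v. - Phi (x n) v) has_derivative (\<lambda>h. (- Gy') \<bullet> h)) (at (y (n - 1)) within edom (fconj f))"
      using has_derivative_minus[OF Phi_dy[OF xe[of n] ye[of "n - 1"]]] by (simp add: Gy'_def)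
    have "- Phi (x n) (y (n - 1)) + (- Gy') \<bullet> (ys - y (n - 1)) \<le> - Phi (x n) ys"
      by (rule tangent_ineq[OF cv ye ys_dom d])
    then show ?thesis by simp
  qed
  have T1m: "tn * Phi (x n) (y n) + tn * (Gxn \<bullet> (xs - x n)) \<le> tn * Phi xs (y n)"
    using mult_left_mono[OF T1, of tn] tn by (simp add: distrib_left)
  have T2m: "tn * Phi (x n) ys \<le> tn * Phi (x n) (y (n - 1)) + tn * (Gy' \<bullet> (ys - y (n - 1)))"
    using mult_left_mono[OF T2, of tn] tn by (simp add: distrib_left)
  have I1: "tn * (Gxn \<bullet> (xs - A)) + tn * (Gxp \<bullet> (A - x n)) - tn * (Gxn \<bullet> (xs - x n))
      = tn * ((Gxn - Gxp) \<bullet> (x n - A))"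
    by (simp add: inner_diff_left inner_diff_right algebra_simps)
  have I2: "- (tn * (Gy' \<bullet> (ys - y n))) + tn * (Gy' \<bullet> (ys - y (n - 1))) = tn * (Gy' \<bullet> (y n - y (n - 1)))"
    by (simp add: inner_diff_right algebra_simps)
  have main: "tn * (Gn + Phi (x n) ys - Fs - (Gs + Phi xs (y n) - Fn))
     \<le> (A - z (n + 1)) \<bullet> (xs - A)
              + 1 / \<beta> * ((y n - y (n - 1)) \<bullet> (ys - y n))
              + \<psi> * \<delta> n * ((x n - z (n + 1)) \<bullet> (A - x n))
              + tn * ((Gxn - Gxp) \<bullet> (x n - A))
              + tn * (Phi (x n) (y (n - 1)) + Gy' \<bullet> (y n - y (n - 1)) - Phi (x n) (y n))"
    using P1raw P1id P2 P2e P3 T1m T2m I1 I2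
    by (simp add: algebra_simps) 
  show ?thesis
    using main unfolding Lag_def Gs Gn Fs Fn
    by (simp add: A_def Gxn_def Gxp_def Gy'_def tn_def)
qed

end
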